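(* For all positive integers $n,k$, $$S^+(n+k) \geq S^+(n+1)\,S^+(k).$$
   Context: A set $A \subseteq \mathbb{N}$ is sum-free if for all $(a,b)\in A^2$ (allowing $a=b$), $a+b \notin A$. For positive integers $p,n$, an S-template with $n$ colors and width $p$ is a partition of $\{1,\dots,p\}$ into $n$ sum-free subsets $A_1,\dots,A_n$ such that for every $i \in \{1,\dots,n-1\}$ (i.e. every subset except $A_n$) and all $(x,y)\in A_i^2$: if $x+y>p$ then $x+y-p \notin A_i$. $S^+(n)$ denotes the greatest width of an S-template with $n$ colors. *)

theory Defs
  imports Main
begin

definition sum_free :: "nat set \<Rightarrow> bool" where
  "sum_free A \<longleftrightarrow> (\<forall>a\<in>A. \<forall>b\<in>A. a + b \<notin> A)"

definition S_template :: "nat \<Rightarrow> nat \<Rightarrow> (nat \<Rightarrow> nat set) \<Rightarrow> bool" where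
  "S_template n p A \<longleftrightarrow>
     (\<Union>i\<in>{1..n}. A i) = {1..p} \<and>
     (\<forall>i\<in>{1..n}. \<forall>j\<in>{1..n}. i \<noteq> j \<longrightarrow> A i \<inter> A j = {}) \<and>
     (\<forall>i\<in>{1..n}. sum_free (A i)) \<and>
     (\<forall>i\<in>{1..n-1}. \<forall>x\<in>A i. \<forall>y\<in>A i. x + y > p \<longrightarrow> x + y - p \<notin> A i)"

definition S_plus :: "nat \<Rightarrow> nat" where
  "S_plus n = (GREATEST p. \<exists>A. S_template n p A)"

end

theory Submission imports Defs begin

lemma uniq_rep:
  fixes p a b r1 r2 :: nat
  assumes "p*a + r1 = p*b + r2" "1 \<le> r1" "r1 \<le> p" "1 \<le> r2" "r2 \<le> p"
  shows "a = b \<and> r1 = r2"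
proof -
  have "\<not> a < b"
  proof
    assume "a < b"
    then have h: "p*a + p \<le> p*b" by (metis Suc_eq_plus1 Suc_leI mult_Suc_right mult_le_mono2 add.commute)
    have "p*a + r1 \<le> p*a + p" using assms by simp
    also have "\<dots> < p*b + r2" using h assms by simp
    finally show False using assms(1) by simp
  qed
  moreover have "\<not> b < a"
  proof
    assume "b < a"
    then have h: "p*b + p \<le> p*a" by (metis Suc_eq_plus1 Suc_leI mult_Suc_right mult_le_mono2 add.commute)
    have "p*b + r2 \<le> p*b + p" using assms by simp
    also have "\<dots> < p*a + r1" using h assms by simp
    finally show False using assms(1) by simp
  qed
  ultimately show ?thesis using assms by simp
qed

lemma sum_rep:
  fixes p t3 r1 r2 r3 Q T :: nat
  assumes "p*t3 + r3 + p*Q = p*T + r1 + r2"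
    "r1 \<in> {1..p}" "r2 \<in> {1..p}" "r3 \<in> {1..p}"
  shows "(r3 = r1 + r2 \<and> t3 + Q = T) \<or> (r1 + r2 > p \<and> r3 = r1 + r2 - p \<and> t3 + Q = T + 1)"
proof (cases "r1 + r2 \<le> p")
  case True
  have e: "p*(t3+Q) + r3 = p*T + (r1+r2)" using assms(1) by (simp add: algebra_simps)
  have "t3 + Q = T \<and> r3 = r1 + r2"
    by (rule uniq_rep[OF e]) (use True assms(2-4) in auto)
  then show ?thesis by simp
next
  case False
  have "p*(t3+Q) + r3 = p*T + p + (r1+r2-p)" using assms(1) False by (simp add: algebra_simps)
  then have e: "p*(t3+Q) + r3 = p*(T+1) + (r1+r2-p)" by (simp add: algebra_simps)
  have "t3 + Q = T + 1 \<and> r3 = r1 + r2 - p"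
    by (rule uniq_rep[OF e]) (use False assms(2-4) in auto)
  then show ?thesis using False by simp
qed

fun g :: "nat \<Rightarrow> nat" where
  "g 0 = 1"
| "g (Suc c) = Suc c * g c + 1"

lemma schur_bound:
  fixes A :: "nat \<Rightarrow> nat set"
  shows "\<And>C X. card C = c \<Longrightarrow> finite C \<Longrightarrow> (\<forall>i\<in>C. sum_free (A i)) \<Longrightarrow> finite X \<Longrightarrow>
    (\<forall>x\<in>X. \<forall>y\<in>X. y < x \<longrightarrow> (\<exists>i\<in>C. x - y \<in> A i)) \<Longrightarrow> card X \<le> g c"
proof (induction c)
  case 0
  then have "C = {}" by simp
  have "x = y" if "x \<in> X" "y \<in> X" for x y
  proof (rule ccontr)
    assume "x \<noteq> y"
    then have "x < y \<or> y < x" by arith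
    then show False using 0(5) that \<open>C = {}\<close> by blast
  qed
  then have "\<forall>x\<in>X. \<forall>y\<in>X. x = y" by blast
  then have "card X \<le> 1" using 0(4) by (simp add: card_le_Suc0_iff_eq)
  then show ?case by simp
next
  case (Suc c)
  show ?case
  proof (cases "X = {}")
    case True then show ?thesis by simp
  next
    case False
    define x0 where "x0 = Min X"
    have x0X: "x0 \<in> X" using False Suc.prems(4) x0_def by simp
    have x0le: "\<forall>x\<in>X. x0 \<le> x" using Suc.prems(4) x0_def by simp
    define Y where "Y = (\<lambda>x. x - x0) ` (X - {x0})"
    have injY: "inj_on (\<lambda>x. x - x0) (X - {x0})"
    proof (rule inj_onI)
      fix a b assume ab: "a \<in> X - {x0}" "b \<in> X - {x0}" "a - x0 = b - x0"
      then have "x0 \<le> a" "x0 \<le> b" using x0le by auto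
      then show "a = b" using ab(3) by arith
    qed
    have cardY: "card Y = card X - 1"
      unfolding Y_def using card_image[OF injY] x0X Suc.prems(4) by simp
    have finY: "finite Y" unfolding Y_def using Suc.prems(4) by simp
    have Ysub: "Y \<subseteq> (\<Union>i\<in>C. Y \<inter> A i)"
    proof
      fix y assume "y \<in> Y"
      then obtain x where x: "x \<in> X" "x \<noteq> x0" "y = x - x0" unfolding Y_def by auto
      then have "x0 \<le> x" using x0le by blast
      then have "x0 < x" using x(2) by arith
      then obtain i where "i \<in> C" "x - x0 \<in> A i" using Suc.prems(5) x x0X by blast
      then show "y \<in> (\<Union>i\<in>C. Y \<inter> A i)" using x \<open>y \<in> Y\<close> by auto
    qed
    have bnd: "card (Y \<inter> A i) \<le> g c" if iC: "i \<in> C" for i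
    proof -
      have "card (C - {i}) = c" using Suc.prems(1,2) iC by simp
      moreover have "finite (C - {i})" using Suc.prems(2) by simp
      moreover have "\<forall>j\<in>C - {i}. sum_free (A j)" using Suc.prems(3) by simp
      moreover have "finite (Y \<inter> A i)" using finY by simp
      moreover have "\<forall>z\<in>Y \<inter> A i. \<forall>z'\<in>Y \<inter> A i. z' < z \<longrightarrow> (\<exists>j\<in>C - {i}. z - z' \<in> A j)"
      proof (intro ballI impI)
        fix z z' assume z: "z \<in> Y \<inter> A i" and z': "z' \<in> Y \<inter> A i" and lt: "z' < z"
        obtain x where x: "x \<in> X" "x \<noteq> x0" "z = x - x0" using z unfolding Y_def by auto
        obtain x' where x': "x' \<in> X" "x' \<noteq> x0" "z' = x' - x0" using z' unfolding Y_def by auto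
        have "x0 \<le> x" "x0 \<le> x'" using x(1) x'(1) x0le by auto
        then have "x' < x" using x(3) x'(3) lt by arith
        then obtain j where j: "j \<in> C" "x - x' \<in> A j" using Suc.prems(5) x x' by blast
        have eq: "z - z' = x - x'" using x(3) x'(3) \<open>x0 \<le> x\<close> \<open>x0 \<le> x'\<close> by arith
        have "j \<noteq> i"
        proof
          assume "j = i"
          then have zz: "z - z' \<in> A i" using j eq by simp
          have sf: "sum_free (A i)" using Suc.prems(3) iC by blast
          have "z' + (z - z') \<notin> A i" using sf z' zz unfolding sum_free_def by blast
          moreover have "z' + (z - z') = z" using lt by arith
          ultimately show False using z by simp
        qed
        then show "\<exists>j\<in>C - {i}. z - z' \<in> A j" using j eq by auto
      qed
      ultimately show ?thesis by (rule Suc.IH)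
    qed
    have "card Y \<le> card (\<Union>i\<in>C. Y \<inter> A i)"
      using Ysub by (intro card_mono) (auto simp: Suc.prems(2) finY)
    also have "\<dots> \<le> (\<Sum>i\<in>C. card (Y \<inter> A i))" by (rule card_UN_le[OF Suc.prems(2)])
    also have "\<dots> \<le> (\<Sum>i\<in>C. g c)" by (intro sum_mono bnd)
    also have "\<dots> = Suc c * g c" using Suc.prems(1) by simp
    finally have "card Y \<le> Suc c * g c" .
    then show ?thesis using cardY by simp
  qed
qed

lemma template_bound:
  assumes "S_template n p A" shows "p + 1 \<le> g n"
proof -
  have "card {0..p} \<le> g (card {1..n})"
  proof (rule schur_bound[where A=A])
    show "\<forall>i\<in>{1..n}. sum_free (A i)" using assms unfolding S_template_def by blast
    show "\<forall>x\<in>{0..p}. \<forall>y\<in>{0..p}. y < x \<longrightarrow> (\<exists>i\<in>{1..n}. x - y \<in> A i)"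
    proof (intro ballI impI)
      fix x y assume "x \<in> {0..p}" "y \<in> {0..p}" "y < x"
      then have "x - y \<in> {1..p}" by auto
      then show "\<exists>i\<in>{1..n}. x - y \<in> A i" using assms unfolding S_template_def by blast
    qed
  qed auto
  then show ?thesis by simp
qed

lemma S_plus_template: "\<exists>A. S_template n (S_plus n) A"
proof -
  have "S_template n 0 (\<lambda>_. {})" unfolding S_template_def sum_free_def by auto
  then show ?thesis unfolding S_plus_def
    by (rule GreatestI_nat[of "\<lambda>p. Ex (S_template n p)" 0 "g n", OF exI]) (metis template_bound Suc_eq_plus1 Suc_leD)
qed

lemma S_plus_ge:
  assumes "S_template n p A" shows "p \<le> S_plus n"
proof -
  have "\<And>y. Ex (S_template n y) \<Longrightarrow> y \<le> g n" using template_bound by fastforce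
  moreover have "Ex (S_template n p)" using assms by blast
  ultimately show ?thesis unfolding S_plus_def
    using Greatest_le_nat[of "\<lambda>p. Ex (S_template n p)" p "g n"] by blast
qed

lemma product_template:
  assumes n1: "n \<ge> 1" and k1: "k \<ge> 1" and TB: "S_template (n+1) p B" and TC: "S_template k q C"
  shows "S_template (n+k) (p*q) (\<lambda>m. if m \<le> n then {p*t + r | t r. t < q \<and> r \<in> B m}
                 else {p*t + r | t r. t+1 \<in> C (m-n) \<and> r \<in> B (n+1)})"
    (is "S_template _ _ ?A")
proof -
  have Bsub: "B i \<subseteq> {1..p}" if "i \<in> {1..n+1}" for i using TB that unfolding S_template_def by blast
  have Bcov: "\<exists>i\<in>{1..n+1}. r \<in> B i" if "r \<in> {1..p}" for r using TB that unfolding S_template_def by blast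
  have Bdis: "B i \<inter> B j = {}" if "i \<in> {1..n+1}" "j \<in> {1..n+1}" "i \<noteq> j" for i j
    using TB that unfolding S_template_def by blast
  have Bsf: "sum_free (B i)" if "i \<in> {1..n+1}" for i using TB that unfolding S_template_def by blast
  have Bmod0: "\<forall>i\<in>{1..n+1-1}. \<forall>x\<in>B i. \<forall>y\<in>B i. x + y > p \<longrightarrow> x + y - p \<notin> B i"
    using TB unfolding S_template_def by blast
  have Bmod: "\<forall>x\<in>B i. \<forall>y\<in>B i. x + y > p \<longrightarrow> x + y - p \<notin> B i" if "i \<in> {1..n}" for i
    using Bmod0 that by simp
  have Csub: "C j \<subseteq> {1..q}" if "j \<in> {1..k}" for j using TC that unfolding S_template_def by blast
  have Ccov: "\<exists>j\<in>{1..k}. t \<in> C j" if "t \<in> {1..q}" for t using TC that unfolding S_template_def by blast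
  have Cdis: "C i \<inter> C j = {}" if "i \<in> {1..k}" "j \<in> {1..k}" "i \<noteq> j" for i j
    using TC that unfolding S_template_def by blast
  have Csf: "sum_free (C j)" if "j \<in> {1..k}" for j using TC that unfolding S_template_def by blast
  have Cmod0: "\<forall>j\<in>{1..k-1}. \<forall>x\<in>C j. \<forall>y\<in>C j. x + y > q \<longrightarrow> x + y - q \<notin> C j"
    using TC unfolding S_template_def by blast
  have Cmod: "\<forall>x\<in>C j. \<forall>y\<in>C j. x + y > q \<longrightarrow> x + y - q \<notin> C j" if "j \<in> {1..k-1}" for j
    using Cmod0 that by blast
  have memA: "x \<in> ?A m \<longleftrightarrow> (\<exists>t r. x = p*t + r \<and> r \<in> {1..p} \<and>
      (if m \<le> n then t < q \<and> r \<in> B m else t+1 \<in> C (m-n) \<and> r \<in> B (n+1)))"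
    if "m \<in> {1..n+k}" for m x
  proof (cases "m \<le> n")
    case True
    then have sub: "B m \<subseteq> {1..p}" using Bsub that by simp
    have "x \<in> ?A m \<longleftrightarrow> (\<exists>t r. x = p*t + r \<and> t < q \<and> r \<in> B m)" using True by simp
    also have "\<dots> \<longleftrightarrow> (\<exists>t r. x = p*t + r \<and> r \<in> {1..p} \<and> t < q \<and> r \<in> B m)" using sub by blast
    finally show ?thesis using True by simp
  next
    case False
    have sub: "B (n+1) \<subseteq> {1..p}" using Bsub by simp
    have "x \<in> ?A m \<longleftrightarrow> (\<exists>t r. x = p*t + r \<and> t+1 \<in> C (m-n) \<and> r \<in> B (n+1))" using False by simp
    also have "\<dots> \<longleftrightarrow> (\<exists>t r. x = p*t + r \<and> r \<in> {1..p} \<and> t+1 \<in> C (m-n) \<and> r \<in> B (n+1))" using sub by blast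
    finally show ?thesis using False by simp
  qed
  have cover: "(\<Union>m\<in>{1..n+k}. ?A m) = {1..p*q}"
  proof
    show "(\<Union>m\<in>{1..n+k}. ?A m) \<subseteq> {1..p*q}"
    proof
      fix x assume "x \<in> (\<Union>m\<in>{1..n+k}. ?A m)"
      then obtain m where m: "m \<in> {1..n+k}" "x \<in> ?A m" by blast
      obtain t r where tr0: "x = p*t + r" "r \<in> {1..p}"
        "if m \<le> n then t < q \<and> r \<in> B m else t+1 \<in> C (m-n) \<and> r \<in> B (n+1)"
        using memA[OF m(1)] m(2) by blast
      have "t + 1 \<le> q"
      proof (cases "m \<le> n")
        case True then show ?thesis using tr0(3) by simp
      next
        case False
        then have "m - n \<in> {1..k}" using m(1) by auto
        then show ?thesis using tr0(3) False Csub[of "m-n"] by auto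
      qed
      note tr = tr0(1,2) this
      have "p*(t+1) \<le> p*q" using tr(3) by (rule mult_le_mono2)
      then show "x \<in> {1..p*q}" using tr by auto
    qed
  next
    show "{1..p*q} \<subseteq> (\<Union>m\<in>{1..n+k}. ?A m)"
    proof
      fix x assume x: "x \<in> {1..p*q}"
      then have p0: "p > 0" by (cases "p = 0") auto
      define t where "t = (x-1) div p"
      define r where "r = (x-1) mod p + 1"
      have xe: "x = p*t + r" using x unfolding t_def r_def by simp
      have r1: "r \<in> {1..p}" using p0 unfolding r_def by (simp add: Suc_leI)
      have "x - 1 < q * p" using x by (auto simp: mult.commute)
      then have tq: "t < q" unfolding t_def by (simp add: less_mult_imp_div_less)
      obtain i where i: "i \<in> {1..n+1}" "r \<in> B i" using Bcov[OF r1] by blast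
      show "x \<in> (\<Union>m\<in>{1..n+k}. ?A m)"
      proof (cases "i \<le> n")
        case True
        have iA: "i \<in> {1..n+k}" using i True k1 by simp
        have "x \<in> ?A i" unfolding memA[OF iA] if_P[OF True] using xe tq i r1 by blast
        then show ?thesis using iA by blast
      next
        case False
        then have "i = n+1" using i by auto
        obtain j where j: "j \<in> {1..k}" "t+1 \<in> C j" using Ccov[of "t+1"] tq by auto
        have jA: "n + j \<in> {1..n+k}" using j by simp
        have nj: "\<not> n + j \<le> n" "n + j - n = j" using j by auto
        have "x \<in> ?A (n+j)" unfolding memA[OF jA] if_not_P[OF nj(1)] nj(2) using xe j i \<open>i = n+1\<close> r1 by blast
        then show ?thesis using jA by blast
      qed
    qed
  qed
  have disj: "?A m \<inter> ?A m' = {}" if m: "m \<in> {1..n+k}" "m' \<in> {1..n+k}" "m \<noteq> m'" for m m'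
  proof (rule ccontr)
    assume "?A m \<inter> ?A m' \<noteq> {}"
    then obtain x where x: "x \<in> ?A m" "x \<in> ?A m'" by blast
    obtain t r where tr: "x = p*t + r" "r \<in> {1..p}"
      "if m \<le> n then t < q \<and> r \<in> B m else t+1 \<in> C (m-n) \<and> r \<in> B (n+1)"
      using x(1) memA[OF m(1)] by blast
    obtain t' r' where tr': "x = p*t' + r'" "r' \<in> {1..p}"
      "if m' \<le> n then t' < q \<and> r' \<in> B m' else t'+1 \<in> C (m'-n) \<and> r' \<in> B (n+1)"
      using x(2) memA[OF m(2)] by blast
    have "t = t' \<and> r = r'" using uniq_rep[of p t r t' r'] tr tr' by auto
    then have e: "t' = t" "r' = r" by auto
    show False
    proof (cases "m \<le> n")
      case T1: True
      show False
      proof (cases "m' \<le> n")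
        case True
        then show False using T1 tr(3) tr'(3) e m Bdis[of m m'] by auto
      next
        case False
        then show False using T1 tr(3) tr'(3) e m Bdis[of m "n+1"] by auto
      qed
    next
      case F1: False
      show False
      proof (cases "m' \<le> n")
        case True
        then show False using F1 tr(3) tr'(3) e m Bdis[of m' "n+1"] by auto
      next
        case False
        have "m - n \<in> {1..k}" "m' - n \<in> {1..k}" "m - n \<noteq> m' - n" using F1 False m by auto
        then have "C (m-n) \<inter> C (m'-n) = {}" by (rule Cdis)
        then show False using F1 False tr(3) tr'(3) e by auto
      qed
    qed
  qed
  have key: False if m: "m \<in> {1..n+k}" and xyz: "x \<in> ?A m" "y \<in> ?A m" "z \<in> ?A m"
    and eq: "x + y = z + p*Q" and Qc: "Q = 0 \<or> (Q = q \<and> m \<le> n+k-1)" for m x y z Q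
  proof -
    obtain t1 r1 where 1: "x = p*t1 + r1" "r1 \<in> {1..p}"
      "if m \<le> n then t1 < q \<and> r1 \<in> B m else t1+1 \<in> C (m-n) \<and> r1 \<in> B (n+1)"
      using xyz(1) memA[OF m] by blast
    obtain t2 r2 where 2: "y = p*t2 + r2" "r2 \<in> {1..p}"
      "if m \<le> n then t2 < q \<and> r2 \<in> B m else t2+1 \<in> C (m-n) \<and> r2 \<in> B (n+1)"
      using xyz(2) memA[OF m] by blast
    obtain t3 r3 where 3: "z = p*t3 + r3" "r3 \<in> {1..p}"
      "if m \<le> n then t3 < q \<and> r3 \<in> B m else t3+1 \<in> C (m-n) \<and> r3 \<in> B (n+1)"
      using xyz(3) memA[OF m] by blast
    have "p*t3 + r3 + p*Q = p*(t1+t2) + r1 + r2" using eq 1 2 3 by (simp add: algebra_simps)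
    then have cs: "(r3 = r1 + r2 \<and> t3 + Q = t1+t2) \<or> (r1 + r2 > p \<and> r3 = r1 + r2 - p \<and> t3 + Q = t1+t2 + 1)"
      using sum_rep 1(2) 2(2) 3(2) by blast
    show False
    proof (cases "m \<le> n")
      case True
      then have b: "r1 \<in> B m" "r2 \<in> B m" "r3 \<in> B m" using 1 2 3 by auto
      have mi: "m \<in> {1..n}" "m \<in> {1..n+1}" using True m by auto
      from cs show False
      proof
        assume "r3 = r1 + r2 \<and> t3 + Q = t1+t2"
        then show False using Bsf[OF mi(2)] b unfolding sum_free_def by auto
      next
        assume "r1 + r2 > p \<and> r3 = r1 + r2 - p \<and> t3 + Q = t1+t2 + 1"
        then show False using Bmod[OF mi(1)] b by auto
      qed
    next
      case False
      define j where "j = m - n"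
      have jk: "j \<in> {1..k}" using False m unfolding j_def by auto
      have b: "r1 \<in> B (n+1)" "r2 \<in> B (n+1)" "r3 \<in> B (n+1)"
        and c: "t1+1 \<in> C j" "t2+1 \<in> C j" "t3+1 \<in> C j" using 1 2 3 False unfolding j_def by auto
      from cs show False
      proof
        assume "r3 = r1 + r2 \<and> t3 + Q = t1+t2"
        then show False using Bsf[of "n+1"] b unfolding sum_free_def by auto
      next
        assume h: "r1 + r2 > p \<and> r3 = r1 + r2 - p \<and> t3 + Q = t1+t2 + 1"
        then have s: "(t3 + 1) + Q = (t1+1) + (t2+1)" by simp
        from Qc show False
        proof
          assume "Q = 0"
          then show False using Csf[OF jk] c s unfolding sum_free_def by (metis add.right_neutral)
        next
          assume "Q = q \<and> m \<le> n+k-1"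
          then have "j \<in> {1..k-1}" "Q = q" using jk unfolding j_def by auto
          then show False using Cmod[of j] c s by (metis add_diff_cancel_right' less_add_same_cancel2 zero_less_Suc add.commute Suc_eq_plus1)
        qed
      qed
    qed
  qed
  show ?thesis unfolding S_template_def
  proof (intro conjI)
    show "(\<Union>m\<in>{1..n+k}. ?A m) = {1..p*q}" by (rule cover)
    show "\<forall>i\<in>{1..n+k}. \<forall>j\<in>{1..n+k}. i \<noteq> j \<longrightarrow> ?A i \<inter> ?A j = {}" using disj by blast
    show "\<forall>i\<in>{1..n+k}. sum_free (?A i)"
      unfolding sum_free_def using key[where Q=0] by fastforce
    show "\<forall>i\<in>{1..n+k-1}. \<forall>x\<in>?A i. \<forall>y\<in>?A i. x + y > p*q \<longrightarrow> x + y - p*q \<notin> ?A i"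
    proof (intro ballI impI)
      fix i x y assume i: "i \<in> {1..n+k-1}" and xy: "x \<in> ?A i" "y \<in> ?A i" and gt: "x + y > p*q"
      show "x + y - p*q \<notin> ?A i"
      proof
        assume "x + y - p*q \<in> ?A i"
        moreover have "x + y = (x + y - p*q) + p*q" using gt by simp
        moreover have "i \<in> {1..n+k}" using i by auto
        ultimately show False using key[of i x y "x + y - p*q" q] xy i by auto
      qed
    qed
  qed
qed

theorem corollary2p7:
  fixes n k :: nat
  assumes "n \<ge> 1" and "k \<ge> 1"
  shows "S_plus (n + k) \<ge> S_plus (n + 1) * S_plus k"
proof -
  obtain B where B: "S_template (n+1) (S_plus (n+1)) B" using S_plus_template by blast
  obtain C where C: "S_template k (S_plus k) C" using S_plus_template by blast
  show ?thesis using S_plus_ge[OF product_template[OF assms B C]] .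
qed

end
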